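(* Let $\{(A_n,B_n)\}_{n\in\mathbb{Z}}$ be a stationary and ergodic sequence of pairs of real-valued random variables on a probability space $(\Omega,\mathcal{F},P)$. Suppose that $$\mathbb{E}[\log|A_n|]<0 \quad\text{and}\quad \mathbb{E}[\log^{+}|B_n|]<\infty,$$ where $\log^{+}x=\max\{\log x,0\}$. Then the nonlinear stochastic recurrence equation $$X_{n+1}=A_{n+1}\,|X_n|+B_{n+1},\qquad n\in\mathbb{Z},$$ has a unique stationary solution $\{X_n\}_{n\in\mathbb{Z}}$.
   Context: A stationary solution of the recurrence is a sequence of real random variables $\{X_n\}_{n\in\mathbb{Z}}$, defined on the same probability space, satisfying the recurrence almost surely for every $n\in\mathbb{Z}$, whose finite-dimensional distributions are invariant under time shifts. Uniqueness is understood almost surely: any two stationary solutions coincide for all $n$ almost surely. This recurrence arises from the $p$-order cloud model, in which the $A_n$ are standard normal random variables. *)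

theory Defs
  imports "HOL-Probability.Probability"
begin

text \<open>Positive part of log |x| (with value 0 at x = 0) and negative part of log |x|
  (with value infinity at x = 0, since log 0 = -infinity).\<close>
definition log_plus_abs :: "real \<Rightarrow> ennreal" where
  "log_plus_abs x = (if x = 0 then 0 else ennreal (max 0 (ln \<bar>x\<bar>)))"

definition log_minus_abs :: "real \<Rightarrow> ennreal" where
  "log_minus_abs x = (if x = 0 then \<infinity> else ennreal (max 0 (- ln \<bar>x\<bar>)))"

definition stationary_process ::
  "'a measure \<Rightarrow> (int \<Rightarrow> 'a \<Rightarrow> 'b::topological_space) \<Rightarrow> bool" where
  "stationary_process M Z \<longleftrightarrow>
     (\<forall>n. Z n \<in> borel_measurable M) \<and>
     (\<forall>J k. finite J \<longrightarrow>
        distr M (PiM J (\<lambda>_. borel)) (\<lambda>\<omega>. \<lambda>j\<in>J. Z (j + k) \<omega>) =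
        distr M (PiM J (\<lambda>_. borel)) (\<lambda>\<omega>. \<lambda>j\<in>J. Z j \<omega>))"

definition ergodic_process ::
  "'a measure \<Rightarrow> (int \<Rightarrow> 'a \<Rightarrow> 'b::topological_space) \<Rightarrow> bool" where
  "ergodic_process M Z \<longleftrightarrow>
     (\<forall>S \<in> sets (PiM (UNIV :: int set) (\<lambda>_. (borel :: 'b measure))).
        (\<forall>x. x \<in> S \<longleftrightarrow> (\<lambda>n. x (n + 1)) \<in> S) \<longrightarrow>
        measure M {\<omega> \<in> space M. (\<lambda>n. Z n \<omega>) \<in> S} \<in> {0, 1})"

definition stationary_solution ::
  "'a measure \<Rightarrow> (int \<Rightarrow> 'a \<Rightarrow> real) \<Rightarrow> (int \<Rightarrow> 'a \<Rightarrow> real) \<Rightarrow> (int \<Rightarrow> 'a \<Rightarrow> real) \<Rightarrow> bool" where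
  "stationary_solution M A B X \<longleftrightarrow>
     stationary_process M X \<and>
     (\<forall>n. AE \<omega> in M. X (n + 1) \<omega> = A (n + 1) \<omega> * \<bar>X n \<omega>\<bar> + B (n + 1) \<omega>)"

end

theory Submission
  imports Defs
begin


locale mpt = prob_space M for M :: "'b measure" +
  fixes T :: "'b \<Rightarrow> 'b"
  assumes T_meas[measurable]: "T \<in> M \<rightarrow>\<^sub>M M" and T_pres: "distr M M T = M"
begin

lemma Tn_meas[measurable]: "(T ^^ j) \<in> M \<rightarrow>\<^sub>M M"
proof (induction j)
  case (Suc j)
  have "(T ^^ j) \<circ> T \<in> M \<rightarrow>\<^sub>M M" by (rule measurable_comp[OF T_meas Suc])
  then show ?case by (simp only: funpow_Suc_right)
qed simp

lemma Tn_pres: "distr M M (T ^^ j) = M"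
proof (induction j)
  case 0 then show ?case by (simp add: distr_id2[OF refl] ) 
next
  case (Suc j)
  have "distr M M (T ^^ Suc j) = distr (distr M M T) M (T ^^ j)"
    by (simp add: distr_distr funpow_Suc_right del: funpow.simps)
  also have "\<dots> = M" using Suc by (simp add: T_pres)
  finally show ?case .
qed

definition bsum :: "('b \<Rightarrow> real) \<Rightarrow> nat \<Rightarrow> 'b \<Rightarrow> real" where
  "bsum g k x = (\<Sum>j<k. g ((T^^j) x))"

lemma bsum_Suc: "bsum g (Suc k) x = g x + bsum g k (T x)"
  unfolding bsum_def sum.lessThan_Suc_shift by (simp only: funpow_Suc_right o_def funpow_0 id_def)

lemma bsum_0[simp]: "bsum g 0 x = 0" by (simp add: bsum_def)

fun maxs :: "('b \<Rightarrow> real) \<Rightarrow> nat \<Rightarrow> 'b \<Rightarrow> real" where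
  "maxs g 0 x = 0" | "maxs g (Suc n) x = max (maxs g n x) (bsum g (Suc n) x)"

lemma maxs_nonneg: "0 \<le> maxs g n x"
  by (induction n) auto

lemma maxs_mono: "n \<le> m \<Longrightarrow> maxs g n x \<le> maxs g m x"
proof (induction m)
  case (Suc m) then show ?case by (cases "n = Suc m") (auto simp: le_Suc_eq)
qed auto

lemma bsum_le_maxs: "k \<le> n \<Longrightarrow> bsum g k x \<le> maxs g n x"
proof (induction n)
  case 0 then show ?case by simp
next
  case (Suc n) then show ?case by (cases "k = Suc n") (auto simp: le_Suc_eq)
qed

lemma maxs_pos_cases: "0 < maxs g n x \<Longrightarrow> \<exists>k. 1 \<le> k \<and> k \<le> n \<and> maxs g n x = bsum g k x"
proof (induction n)
  case 0 then show ?case by simp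
next
  case (Suc n)
  show ?case
  proof (cases "maxs g n x \<le> bsum g (Suc n) x")
    case True then show ?thesis by (intro exI[of _ "Suc n"]) auto
  next
    case False
    then have "maxs g (Suc n) x = maxs g n x" by simp
    with Suc show ?thesis by (metis le_Suc_eq)
  qed
qed

lemma maxs_step: "0 < maxs g n x \<Longrightarrow> maxs g n x \<le> g x + maxs g n (T x)"
proof -
  assume "0 < maxs g n x"
  then obtain k where k: "1 \<le> k" "k \<le> n" "maxs g n x = bsum g k x" using maxs_pos_cases by blast
  then obtain k' where k': "k = Suc k'" by (cases k) auto
  have "bsum g k' (T x) \<le> maxs g n (T x)" using k k' by (intro bsum_le_maxs) auto
  then show ?thesis using k k' by (simp add: bsum_Suc)
qed

context
  fixes g :: "'b \<Rightarrow> real"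
  assumes g_int: "integrable M g"
begin

lemma g_meas[measurable]: "g \<in> borel_measurable M" using g_int by auto

lemma gTn_int: "integrable M (\<lambda>x. g ((T^^j) x))"
proof -
  have "integrable (distr M M (T^^j)) g" using Tn_pres g_int by simp
  then show ?thesis by (subst (asm) integrable_distr_eq) auto
qed

lemma bsum_int: "integrable M (bsum g k)"
  unfolding bsum_def using gTn_int by auto

lemma bsum_meas[measurable]: "bsum g k \<in> borel_measurable M"
  using bsum_int by auto

lemma maxs_int: "integrable M (maxs g n)"
proof (induction n)
  case 0 then show ?case by simp
next
  case (Suc n) then show ?case using bsum_int[of "Suc n"] by (simp add: integrable_max)
qed

lemma maxs_meas[measurable]: "maxs g n \<in> borel_measurable M"
  using maxs_int by auto

lemma maximal_ergodic: "0 \<le> (\<integral>x. indicator {x\<in>space M. 0 < maxs g n x} x * g x \<partial>M)"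
proof -
  have "(\<integral>x. maxs g n (T x) \<partial>M) = (\<integral>x. maxs g n x \<partial>distr M M T)"
    by (subst integral_distr) auto
  also have "\<dots> = (\<integral>x. maxs g n x \<partial>M)" by (simp add: T_pres)
  finally have eq: "(\<integral>x. maxs g n (T x) \<partial>M) = (\<integral>x. maxs g n x \<partial>M)" .
  have iT: "integrable M (\<lambda>x. maxs g n (T x))"
  proof -
    have "integrable (distr M M T) (maxs g n)" using T_pres maxs_int by simp
    then show ?thesis by (subst (asm) integrable_distr_eq) auto
  qed
  have "0 = (\<integral>x. maxs g n x - maxs g n (T x) \<partial>M)"
    using eq iT maxs_int by simp
  also have "\<dots> \<le> (\<integral>x. indicator {x\<in>space M. 0 < maxs g n x} x * g x \<partial>M)"
  proof (rule integral_mono)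
    show "integrable M (\<lambda>x. maxs g n x - maxs g n (T x))" using iT maxs_int by auto
    show "integrable M (\<lambda>x. indicator {x\<in>space M. 0 < maxs g n x} x * g x)"
      using integrable_real_mult_indicator[OF _ g_int, of "{x\<in>space M. 0 < maxs g n x}"] by (simp add: mult.commute)
    fix x assume x: "x \<in> space M"
    show "maxs g n x - maxs g n (T x) \<le> indicator {x\<in>space M. 0 < maxs g n x} x * g x"
    proof (cases "0 < maxs g n x")
      case True then show ?thesis using maxs_step[of g n x] x by simp
    next
      case False then show ?thesis using maxs_nonneg[of g n x] maxs_nonneg[of g n "T x"] x by simp
    qed
  qed
  finally show ?thesis .
qed


lemma bounded_sums:
  assumes neg: "integral\<^sup>L M g < 0"
    and erg: "\<And>S. S \<in> sets M \<Longrightarrow> (\<forall>x\<in>space M. x \<in> S \<longleftrightarrow> T x \<in> S) \<Longrightarrow> prob S = 0 \<or> prob S = 1"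
  shows "AE x in M. \<exists>C. \<forall>k. bsum g k x \<le> C"
proof -
  define E where "E = {x\<in>space M. \<forall>c::nat. \<exists>k. real c < bsum g k x}"
  have E_sets: "E \<in> sets M" unfolding E_def by measurable
  have inv: "x \<in> E \<longleftrightarrow> T x \<in> E" if x: "x \<in> space M" for x
  proof
    assume xE: "x \<in> E"
    have Tx: "T x \<in> space M" using x measurable_space[OF T_meas] by auto
    show "T x \<in> E" unfolding E_def
    proof (intro CollectI conjI allI Tx)
      fix c :: nat
      define N where "N = nat \<lceil>real c + \<bar>g x\<bar>\<rceil>"
      obtain k where k: "real N < bsum g k x" using xE unfolding E_def by blast
      have N: "real c + \<bar>g x\<bar> \<le> real N" unfolding N_def by linarith
      have "k \<noteq> 0" using k by (cases "k = 0") auto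
      then obtain k' where k': "k = Suc k'" by (cases k) auto
      have "real c < bsum g k' (T x)" using k N unfolding k' bsum_Suc by linarith
      then show "\<exists>k. real c < bsum g k (T x)" by blast
    qed
  next
    assume TxE: "T x \<in> E"
    show "x \<in> E" unfolding E_def
    proof (intro CollectI conjI allI x)
      fix c :: nat
      define N where "N = nat \<lceil>real c + \<bar>g x\<bar>\<rceil>"
      obtain k where k: "real N < bsum g k (T x)" using TxE unfolding E_def by blast
      have N: "real c + \<bar>g x\<bar> \<le> real N" unfolding N_def by linarith
      have "real c < bsum g (Suc k) x" using k N unfolding bsum_Suc by linarith
      then show "\<exists>k. real c < bsum g k x" by blast
    qed
  qed
  have "prob E \<noteq> 1"
  proof
    assume "prob E = 1"
    then have AE: "AE x in M. x \<in> E" using AE_in_set_eq_1[OF E_sets] by simp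
    have lim: "AE x in M. (\<lambda>n. indicator {x\<in>space M. 0 < maxs g n x} x * g x) \<longlonglongrightarrow> g x"
      using AE
    proof eventually_elim
      case (elim x)
      then obtain k where k: "real 0 < bsum g k x" and x: "x \<in> space M" unfolding E_def by blast
      have "eventually (\<lambda>n. indicator {x\<in>space M. 0 < maxs g n x} x * g x = g x) sequentially"
        unfolding eventually_sequentially
      proof (intro exI allI impI)
        fix n assume "k \<le> n"
        then have "bsum g k x \<le> maxs g n x" by (rule bsum_le_maxs)
        then show "indicator {x\<in>space M. 0 < maxs g n x} x * g x = g x" using k x by simp
      qed
      then show ?case by (rule tendsto_eventually)
    qed
    have "(\<lambda>n. \<integral>x. indicator {x\<in>space M. 0 < maxs g n x} x * g x \<partial>M) \<longlonglongrightarrow> integral\<^sup>L M g"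
    proof (rule integral_dominated_convergence[where w="\<lambda>x. \<bar>g x\<bar>"])
      show "integrable M (\<lambda>x. \<bar>g x\<bar>)" using g_int by auto
      show "AE x in M. norm (indicator {x\<in>space M. 0 < maxs g n x} x * g x) \<le> \<bar>g x\<bar>" for n
        by (auto split: split_indicator)
    qed (use lim in auto)
    then have "0 \<le> integral\<^sup>L M g"
      by (rule LIMSEQ_le_const) (use maximal_ergodic in auto)
    with neg show False by simp
  qed
  then have "prob E = 0" using erg[OF E_sets] inv by blast
  then have "AE x in M. x \<notin> E" using prob_eq_0[OF E_sets] by simp
  then show ?thesis using AE_space
  proof eventually_elim
    case (elim x)
    then obtain c :: nat where "\<forall>k. \<not> real c < bsum g k x" unfolding E_def by blast
    then show ?case by (intro exI[of _ "real c"]) (auto simp: not_less)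
  qed
qed

end
end




lemma path_meas:
  fixes Z :: "int \<Rightarrow> 'a \<Rightarrow> 'b::topological_space"
  assumes "\<And>n. Z n \<in> borel_measurable M"
  shows "(\<lambda>\<omega> i. Z (i + k) \<omega>) \<in> M \<rightarrow>\<^sub>M PiM UNIV (\<lambda>_. borel)"
  by (rule measurable_PiM_single') (auto simp: assms)

lemma stat_path:
  fixes Z :: "int \<Rightarrow> 'a \<Rightarrow> 'b::topological_space"
  assumes P: "prob_space M" and S: "stationary_process M Z"
  shows "distr M (PiM UNIV (\<lambda>_. borel)) (\<lambda>\<omega> i. Z (i + k) \<omega>) = distr M (PiM UNIV (\<lambda>_. borel)) (\<lambda>\<omega> i. Z i \<omega>)"
proof -
  have meas: "\<And>n. Z n \<in> borel_measurable M" and fdd: "\<And>J k. finite J \<Longrightarrow>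
        distr M (PiM J (\<lambda>_. borel)) (\<lambda>\<omega>. \<lambda>j\<in>J. Z (j + k) \<omega>) =
        distr M (PiM J (\<lambda>_. borel)) (\<lambda>\<omega>. \<lambda>j\<in>J. Z j \<omega>)"
    using S unfolding stationary_process_def by auto
  have pm: "(\<lambda>\<omega> i. Z (i + k) \<omega>) \<in> M \<rightarrow>\<^sub>M PiM UNIV (\<lambda>_. borel)" for k
    by (rule path_meas) (rule meas)
  have gen: "emeasure (distr M (PiM UNIV (\<lambda>_. borel)) (\<lambda>\<omega> i. Z (i + k) \<omega>)) (prod_emb UNIV (\<lambda>_. borel) J (Pi\<^sub>E J A))
     = emeasure (distr M (PiM J (\<lambda>_. borel)) (\<lambda>\<omega>. \<lambda>j\<in>J. Z (j + k) \<omega>)) (Pi\<^sub>E J A)"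
    if J: "finite J" and A: "\<And>i. i \<in> J \<Longrightarrow> A i \<in> sets borel" for J A k
  proof -
    have s1: "prod_emb UNIV (\<lambda>_. borel) J (Pi\<^sub>E J A) \<in> sets (PiM UNIV (\<lambda>_. borel))"
      using J A by (intro sets_PiM_I) auto
    have s2: "Pi\<^sub>E J A \<in> sets (PiM J (\<lambda>_. borel))"
      using J A by (intro sets_PiM_I_finite) auto
    have m2: "(\<lambda>\<omega>. \<lambda>j\<in>J. Z (j + k) \<omega>) \<in> M \<rightarrow>\<^sub>M PiM J (\<lambda>_. borel)"
      using meas by (intro measurable_restrict) auto
    show ?thesis
      using s1 s2 m2 pm[of k]
      by (simp add: emeasure_distr) (intro arg_cong[where f="emeasure M"], auto simp: prod_emb_def PiE_def Pi_def extensional_def)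
  qed
  show ?thesis
  proof (rule measure_eqI_PiM_infinite)
    show "finite_measure (distr M (PiM UNIV (\<lambda>_. borel)) (\<lambda>\<omega> i. Z (i + k) \<omega>))"
      using prob_space.prob_space_distr[OF P pm[of k]] by (simp add: prob_space.finite_measure)
    fix J :: "int set" and A :: "int \<Rightarrow> 'b set" assume J: "finite J" "J \<subseteq> UNIV" and A: "\<And>i. i \<in> J \<Longrightarrow> A i \<in> sets borel"
    show "emeasure (distr M (PiM UNIV (\<lambda>_. borel)) (\<lambda>\<omega> i. Z (i + k) \<omega>)) (prod_emb UNIV (\<lambda>_. borel) J (Pi\<^sub>E J A))
      = emeasure (distr M (PiM UNIV (\<lambda>_. borel)) (\<lambda>\<omega> i. Z i \<omega>)) (prod_emb UNIV (\<lambda>_. borel) J (Pi\<^sub>E J A))"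
      using gen[OF J(1) A, where k=k] gen[OF J(1) A, where k=0] fdd[OF J(1), where k=k] by simp
  qed auto
qed




lemma fst_bm[measurable]: "(fst :: real\<times>real \<Rightarrow> real) \<in> borel_measurable borel"
  by (intro borel_measurable_continuous_onI continuous_intros)
lemma snd_bm[measurable]: "(snd :: real\<times>real \<Rightarrow> real) \<in> borel_measurable borel"
  by (intro borel_measurable_continuous_onI continuous_intros)

definition lpr :: "real \<Rightarrow> real" where "lpr b = (if b = 0 then 0 else max 0 (ln \<bar>b\<bar>))"
definition lmK :: "real \<Rightarrow> real \<Rightarrow> real" where
  "lmK K a = (if a = 0 then K else min K (max 0 (- ln \<bar>a\<bar>)))"

lemma lpr_nonneg: "0 \<le> lpr b" by (simp add: lpr_def)

lemma abs_le_exp_lpr: "\<bar>b\<bar> \<le> exp (lpr b)"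
proof (cases "b = 0")
  case False
  have "ln \<bar>b\<bar> \<le> lpr b" using False by (simp add: lpr_def)
  then have "exp (ln \<bar>b\<bar>) \<le> exp (lpr b)" by (rule iffD2[OF exp_le_cancel_iff])
  then show ?thesis using False by simp
qed (simp add: lpr_def)

lemma abs_le_exp_lm: "0 \<le> K \<Longrightarrow> \<bar>a\<bar> \<le> exp (lpr a - lmK K a)"
proof (cases "a = 0")
  case False
  assume K: "0 \<le> K"
  have "ln \<bar>a\<bar> \<le> lpr a - lmK K a" using False K by (auto simp: lpr_def lmK_def)
  then have "exp (ln \<bar>a\<bar>) \<le> exp (lpr a - lmK K a)" by (rule iffD2[OF exp_le_cancel_iff])
  then show ?thesis using False by simp
qed (simp add: lpr_def)

lemma lmK_bounds: "0 \<le> K \<Longrightarrow> 0 \<le> lmK K a \<and> lmK K a \<le> K"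
  by (auto simp: lmK_def)

lemma lpr_meas[measurable]: "lpr \<in> borel_measurable borel" unfolding lpr_def by measurable
lemma lmK_meas[measurable]: "lmK K \<in> borel_measurable borel" unfolding lmK_def by measurable

lemma log_plus_abs_eq: "log_plus_abs a = ennreal (lpr a)"
  by (simp add: log_plus_abs_def lpr_def)

lemma log_minus_abs_SUP: "log_minus_abs a = (SUP K::nat. ennreal (lmK (real K) a))"
proof (cases "a = 0")
  case True
  then show ?thesis
    by (simp add: log_minus_abs_def lmK_def ennreal_of_nat_eq_real_of_nat[symmetric] ennreal_SUP_of_nat_eq_top)
next
  case False
  define v where "v = max 0 (- ln \<bar>a\<bar>)"
  have v: "0 \<le> v" by (simp add: v_def)
  have "(SUP K::nat. ennreal (min (real K) v)) = ennreal v"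
  proof (rule antisym)
    show "(SUP K::nat. ennreal (min (real K) v)) \<le> ennreal v"
      by (rule SUP_least) (simp add: ennreal_leI)
    have "min (real (nat \<lceil>v\<rceil>)) v = v" by linarith
    then show "ennreal v \<le> (SUP K::nat. ennreal (min (real K) v))"
      by (intro SUP_upper2[of "nat \<lceil>v\<rceil>"]) auto
  qed
  then show ?thesis using False by (simp add: log_minus_abs_def lmK_def v_def)
qed




locale setting =
  fixes M :: "'a measure" and A B :: "int \<Rightarrow> 'a \<Rightarrow> real"
  assumes PS: "prob_space M"
    and stat: "stationary_process M (\<lambda>n \<omega>. (A n \<omega>, B n \<omega>))"
    and erg: "ergodic_process M (\<lambda>n \<omega>. (A n \<omega>, B n \<omega>))"
    and logA: "\<And>n. (\<integral>\<^sup>+ \<omega>. log_plus_abs (A n \<omega>) \<partial>M) < (\<integral>\<^sup>+ \<omega>. log_minus_abs (A n \<omega>) \<partial>M)"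
    and logB: "\<And>n. (\<integral>\<^sup>+ \<omega>. log_plus_abs (B n \<omega>) \<partial>M) < \<infinity>"
begin

sublocale prob_space M by (rule PS)

abbreviation PS :: "(int \<Rightarrow> real \<times> real) measure" where
  "PS \<equiv> PiM UNIV (\<lambda>_. borel)"

definition path :: "'a \<Rightarrow> int \<Rightarrow> real \<times> real" where "path \<omega> = (\<lambda>i. (A i \<omega>, B i \<omega>))"
definition P where "P = distr M PS path"
definition T :: "(int \<Rightarrow> real \<times> real) \<Rightarrow> (int \<Rightarrow> real \<times> real)" where "T x = (\<lambda>i. x (i - 1))"

lemma Z_meas: "(\<lambda>\<omega>. (A n \<omega>, B n \<omega>)) \<in> borel_measurable M"
  using stat unfolding stationary_process_def by auto

lemma A_meas[measurable]: "A n \<in> borel_measurable M"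
  using measurable_compose[OF Z_meas fst_bm] by simp
lemma B_meas[measurable]: "B n \<in> borel_measurable M"
  using measurable_compose[OF Z_meas snd_bm] by simp

lemma path_m[measurable]: "path \<in> M \<rightarrow>\<^sub>M PS"
  unfolding path_def by (rule measurable_PiM_single') auto

lemma space_PS: "space PS = UNIV" by (simp add: space_PiM)

lemma sets_P[measurable_cong]: "sets P = sets PS" by (simp add: P_def)
lemma space_P: "space P = UNIV" using sets_eq_imp_space_eq[OF sets_P] space_PS by simp

lemma P_prob: "prob_space P" unfolding P_def by (rule prob_space_distr) simp

lemma T_PS: "T \<in> PS \<rightarrow>\<^sub>M PS"
  unfolding T_def by (rule measurable_PiM_single') (auto simp: space_PS)

lemma T_meas: "T \<in> P \<rightarrow>\<^sub>M P"
  using T_PS by (simp add: measurable_cong_sets[OF sets_P sets_P])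

lemma T_pres: "distr P P T = P"
proof -
  have "distr P P T = distr P PS T" by (rule distr_cong) (auto simp: sets_P)
  also have "\<dots> = distr M PS (T \<circ> path)" unfolding P_def by (rule distr_distr[OF T_PS path_m])
  also have "T \<circ> path = (\<lambda>\<omega> i. (\<lambda>n \<omega>. (A n \<omega>, B n \<omega>)) (i + (-1)) \<omega>)"
    by (auto simp: T_def path_def fun_eq_iff)
  also have "distr M PS \<dots> = distr M PS (\<lambda>\<omega> i. (\<lambda>n \<omega>. (A n \<omega>, B n \<omega>)) i \<omega>)"
    by (rule stat_path[OF PS stat])
  also have "\<dots> = P" by (simp add: P_def path_def[abs_def])
  finally show ?thesis .
qed

lemma erg_P: "S \<in> sets P \<Longrightarrow> (\<forall>x\<in>space P. x \<in> S \<longleftrightarrow> T x \<in> S) \<Longrightarrow> measure P S = 0 \<or> measure P S = 1"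
proof -
  assume S: "S \<in> sets P" and inv: "\<forall>x\<in>space P. x \<in> S \<longleftrightarrow> T x \<in> S"
  have S': "S \<in> sets PS" using S sets_P by simp
  have inv': "x \<in> S \<longleftrightarrow> (\<lambda>n. x (n + 1)) \<in> S" for x
  proof -
    have "T (\<lambda>n. x (n + 1)) = x" by (simp add: T_def)
    then show ?thesis using inv space_P by (metis UNIV_I)
  qed
  have "measure M {\<omega> \<in> space M. (\<lambda>n. (A n \<omega>, B n \<omega>)) \<in> S} \<in> {0, 1}"
    using erg S' inv' unfolding ergodic_process_def by blast
  moreover have "measure P S = measure M {\<omega> \<in> space M. (\<lambda>n. (A n \<omega>, B n \<omega>)) \<in> S}"
    unfolding P_def by (subst measure_distr[OF path_m S']) (auto simp: path_def[abs_def] vimage_def Int_def conj_commute)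
  ultimately show ?thesis by auto
qed

sublocale Pm: mpt P T
  by (rule mpt.intro[OF P_prob]) (unfold_locales, rule T_meas, rule T_pres)

lemma Tpow: "(T ^^ j) x = (\<lambda>i. x (i - int j))"
  by (induction j arbitrary: x) (auto simp: T_def fun_eq_iff algebra_simps)

end



context setting begin

lemma int_lpr: "integrable M (\<lambda>\<omega>. lpr (B k \<omega>))"
proof (rule integrableI_nonneg)
  show "AE x in M. 0 \<le> lpr (B k x)" by (simp add: lpr_nonneg)
  show "(\<integral>\<^sup>+ x. ennreal (lpr (B k x)) \<partial>M) < \<infinity>" using logB[of k] by (simp add: log_plus_abs_eq)
qed measurable

lemma key: "\<exists>\<epsilon>>0. AE \<omega> in M. \<exists>C. \<forall>m. (\<Prod>j<m. \<bar>A (n - int j) \<omega>\<bar>) * exp (lpr (B (n - int m) \<omega>)) \<le> exp (C - \<epsilon> * real m)"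
proof -
  have "(\<integral>\<^sup>+ \<omega>. ennreal (lpr (A n \<omega>)) \<partial>M) < (\<integral>\<^sup>+ \<omega>. (SUP K::nat. ennreal (lmK (real K) (A n \<omega>))) \<partial>M)"
    using logA[of n] by (simp add: log_plus_abs_eq log_minus_abs_SUP)
  also have "\<dots> = (SUP K::nat. \<integral>\<^sup>+ \<omega>. ennreal (lmK (real K) (A n \<omega>)) \<partial>M)"
  proof (rule nn_integral_monotone_convergence_SUP)
    show "incseq (\<lambda>K \<omega>. ennreal (lmK (real K) (A n \<omega>)))"
      by (auto simp: incseq_def le_fun_def lmK_def intro!: ennreal_leI)
  qed measurable
  finally obtain K :: nat where K: "(\<integral>\<^sup>+ \<omega>. ennreal (lpr (A n \<omega>)) \<partial>M) < (\<integral>\<^sup>+ \<omega>. ennreal (lmK (real K) (A n \<omega>)) \<partial>M)"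
    by (auto simp: less_SUP_iff)
  define u where "u a = lpr a - lmK (real K) a" for a
  have u_meas[measurable]: "u \<in> borel_measurable borel" unfolding u_def by measurable
  have intA: "integrable M (\<lambda>\<omega>. lpr (A n \<omega>))"
  proof (rule integrableI_nonneg)
    show "AE x in M. 0 \<le> lpr (A n x)" by (simp add: lpr_nonneg)
    show "(\<integral>\<^sup>+ x. ennreal (lpr (A n x)) \<partial>M) < \<infinity>" using logA[of n]
      by (simp add: log_plus_abs_eq) (meson less_le_trans top_greatest)
  qed measurable
  have bndK: "(\<integral>\<^sup>+ \<omega>. ennreal (lmK (real K) (A n \<omega>)) \<partial>M) \<le> ennreal (real K)"
  proof -
    have "(\<integral>\<^sup>+ \<omega>. ennreal (lmK (real K) (A n \<omega>)) \<partial>M) \<le> (\<integral>\<^sup>+ \<omega>. ennreal (real K) \<partial>M)"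
      by (intro nn_integral_mono ennreal_leI) (use lmK_bounds[of "real K"] in auto)
    also have "\<dots> = ennreal (real K)" by (simp add: emeasure_space_1)
    finally show ?thesis .
  qed
  have intK: "integrable M (\<lambda>\<omega>. lmK (real K) (A n \<omega>))"
  proof (rule integrableI_nonneg)
    show "AE x in M. 0 \<le> lmK (real K) (A n x)" using lmK_bounds[of "real K"] by auto
    show "(\<integral>\<^sup>+ x. ennreal (lmK (real K) (A n x)) \<partial>M) < \<infinity>" using bndK
      by (simp add: le_less_trans)
  qed measurable
  define a where "a = (\<integral>\<omega>. lpr (A n \<omega>) \<partial>M)"
  define b where "b = (\<integral>\<omega>. lmK (real K) (A n \<omega>) \<partial>M)"
  have ab: "a < b"
  proof -
    have a': "a = enn2real (\<integral>\<^sup>+ \<omega>. ennreal (lpr (A n \<omega>)) \<partial>M)"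
      unfolding a_def by (rule integral_eq_nn_integral) (auto simp: lpr_nonneg)
    have b': "b = enn2real (\<integral>\<^sup>+ \<omega>. ennreal (lmK (real K) (A n \<omega>)) \<partial>M)"
      unfolding b_def by (rule integral_eq_nn_integral) (use lmK_bounds[of "real K"] in auto)
    have fin: "(\<integral>\<^sup>+ \<omega>. ennreal (lmK (real K) (A n \<omega>)) \<partial>M) < top"
      using bndK by (simp add: le_less_trans)
    have fin2: "(\<integral>\<^sup>+ \<omega>. ennreal (lpr (A n \<omega>)) \<partial>M) < top" using K fin by simp
    show ?thesis unfolding a' b' using K fin fin2
      by (simp add: enn2real_less_iff ennreal_enn2real_if)
  qed
  define \<delta> where "\<delta> = (b - a) / 4"
  have \<delta>: "0 < \<delta>" using ab by (simp add: \<delta>_def)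
  define g where "g x = u (fst (x n)) + 2 * \<delta> + (lpr (snd (x (n - 1))) - lpr (snd (x n)))" for x :: "int \<Rightarrow> real \<times> real"
  have g_meas[measurable]: "g \<in> borel_measurable PS" unfolding g_def by measurable
  have intP1: "integrable P (\<lambda>x. u (fst (x n)))"
    unfolding P_def by (subst integrable_distr_eq) (auto simp: path_def u_def intro!: intA intK)
  have intP2: "integrable P (\<lambda>x. lpr (snd (x k)))" for k
    unfolding P_def by (subst integrable_distr_eq) (auto simp: path_def intro!: int_lpr)
  have intP3: "integrable P (\<lambda>x. lpr (snd (x (n - 1))))" by (rule intP2)
  have g_int: "integrable P g" unfolding g_def using intP1 intP2 intP3 by auto
  have I1: "(\<integral>x. u (fst (x n)) \<partial>P) = a - b"
  proof -
    have "(\<integral>x. u (fst (x n)) \<partial>P) = (\<integral>\<omega>. u (A n \<omega>) \<partial>M)"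
      unfolding P_def by (subst integral_distr) (auto simp: path_def)
    also have "\<dots> = a - b" unfolding u_def a_def b_def using intA intK by simp
    finally show ?thesis .
  qed
  have I2: "(\<integral>x. lpr (snd (x (n - 1))) \<partial>P) = (\<integral>x. lpr (snd (x n)) \<partial>P)"
  proof -
    have "(\<integral>x. lpr (snd (x (n - 1))) \<partial>P) = (\<integral>x. lpr (snd (T x n)) \<partial>P)" by (simp add: T_def)
    also have "\<dots> = (\<integral>x. lpr (snd (x n)) \<partial>distr P P T)"
      by (subst integral_distr) (auto intro: T_meas)
    also have "\<dots> = (\<integral>x. lpr (snd (x n)) \<partial>P)" by (simp add: T_pres)
    finally show ?thesis .
  qed
  have "integral\<^sup>L P g = a - b + 2 * \<delta>"
    unfolding g_def using intP1 intP2 intP3 I1 I2 by (simp add: prob_space.prob_space[OF P_prob])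
  moreover have "a - b + 2 * \<delta> < 0" using ab unfolding \<delta>_def by (simp add: field_simps)
  ultimately have gneg: "integral\<^sup>L P g < 0" by simp
  have AEP: "AE x in P. \<exists>C. \<forall>k. Pm.bsum g k x \<le> C"
    by (rule Pm.bounded_sums[OF g_int gneg erg_P]) auto
  have AEM: "AE \<omega> in M. \<exists>C. \<forall>k. Pm.bsum g k (path \<omega>) \<le> C"
    using AE_distrD[OF path_m AEP[unfolded P_def]] by simp
  show ?thesis
  proof (intro exI[of _ "2 * \<delta>"] conjI)
    show "0 < 2 * \<delta>" using \<delta> by simp
    show "AE \<omega> in M. \<exists>C. \<forall>m. (\<Prod>j<m. \<bar>A (n - int j) \<omega>\<bar>) * exp (lpr (B (n - int m) \<omega>)) \<le> exp (C - 2 * \<delta> * real m)"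
      using AEM
    proof eventually_elim
      case (elim \<omega>)
      then obtain C where C: "\<And>k. Pm.bsum g k (path \<omega>) \<le> C" by blast
      have bs: "Pm.bsum g m (path \<omega>) = (\<Sum>j<m. u (A (n - int j) \<omega>)) + 2 * \<delta> * real m + (lpr (B (n - int m) \<omega>) - lpr (B n \<omega>))" for m
      proof -
        have "Pm.bsum g m (path \<omega>) = (\<Sum>j<m. u (A (n - int j) \<omega>) + 2 * \<delta> + (lpr (B (n - int (Suc j)) \<omega>) - lpr (B (n - int j) \<omega>)))"
          unfolding Pm.bsum_def Tpow g_def by (simp add: path_def algebra_simps)
        also have "\<dots> = (\<Sum>j<m. u (A (n - int j) \<omega>)) + 2 * \<delta> * real m + (\<Sum>j<m. lpr (B (n - int (Suc j)) \<omega>) - lpr (B (n - int j) \<omega>))"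
          by (simp add: sum.distrib)
        also have "(\<Sum>j<m. lpr (B (n - int (Suc j)) \<omega>) - lpr (B (n - int j) \<omega>)) = lpr (B (n - int m) \<omega>) - lpr (B n \<omega>)"
          by (subst sum_lessThan_telescope[where f="\<lambda>j. lpr (B (n - int j) \<omega>)"]) simp
        finally show ?thesis .
      qed
      show ?case
      proof (intro exI[of _ "C + lpr (B n \<omega>)"] allI)
        fix m
        have "(\<Prod>j<m. \<bar>A (n - int j) \<omega>\<bar>) \<le> (\<Prod>j<m. exp (u (A (n - int j) \<omega>)))"
          by (intro prod_mono) (auto simp: u_def abs_le_exp_lm)
        also have "\<dots> = exp (\<Sum>j<m. u (A (n - int j) \<omega>))" by (simp add: exp_sum)
        finally have "(\<Prod>j<m. \<bar>A (n - int j) \<omega>\<bar>) * exp (lpr (B (n - int m) \<omega>))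
           \<le> exp (\<Sum>j<m. u (A (n - int j) \<omega>)) * exp (lpr (B (n - int m) \<omega>))"
          by (rule mult_right_mono) simp
        also have "\<dots> = exp ((\<Sum>j<m. u (A (n - int j) \<omega>)) + lpr (B (n - int m) \<omega>))" by (simp add: exp_add)
        also have "\<dots> \<le> exp (C + lpr (B n \<omega>) - 2 * \<delta> * real m)"
          using C[of m] bs[of m] by simp
        finally show "(\<Prod>j<m. \<bar>A (n - int j) \<omega>\<bar>) * exp (lpr (B (n - int m) \<omega>)) \<le> exp (C + lpr (B n \<omega>) - 2 * \<delta> * real m)" .
      qed
    qed
  qed
qed

end



fun yy :: "nat \<Rightarrow> (int \<Rightarrow> real \<times> real) \<Rightarrow> int \<Rightarrow> real" where
  "yy 0 x n = 0"
| "yy (Suc m) x n = fst (x n) * \<bar>yy m x (n - 1)\<bar> + snd (x n)"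

definition Phi :: "int \<Rightarrow> (int \<Rightarrow> real \<times> real) \<Rightarrow> real" where
  "Phi n x = lim (\<lambda>m. yy m x n)"

lemma yy_meas[measurable]: "(\<lambda>x. yy m x n) \<in> borel_measurable (PiM UNIV (\<lambda>_. borel))"
proof (induction m arbitrary: n)
  case (Suc m)
  note [measurable] = Suc.IH
  show ?case by simp
qed simp

lemma Phi_meas[measurable]: "Phi n \<in> borel_measurable (PiM UNIV (\<lambda>_. borel))"
  unfolding Phi_def by measurable

lemma yy_shift: "yy m (\<lambda>i. x (i + k)) n = yy m x (n + k)"
  by (induction m arbitrary: n) (auto simp: algebra_simps)

lemma Phi_shift: "Phi j (\<lambda>i. x (i + k)) = Phi (j + k) x"
  by (simp add: Phi_def yy_shift)

lemma yy_diff: "\<bar>yy (Suc m) x n - yy m x n\<bar> \<le> (\<Prod>j<m. \<bar>fst (x (n - int j))\<bar>) * \<bar>snd (x (n - int m))\<bar>"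
proof (induction m arbitrary: n)
  case 0 then show ?case by simp
next
  case (Suc m)
  have "\<bar>yy (Suc (Suc m)) x n - yy (Suc m) x n\<bar> = \<bar>fst (x n)\<bar> * \<bar>\<bar>yy (Suc m) x (n - 1)\<bar> - \<bar>yy m x (n - 1)\<bar>\<bar>"
    by (simp add: abs_mult[symmetric] algebra_simps)
  also have "\<dots> \<le> \<bar>fst (x n)\<bar> * \<bar>yy (Suc m) x (n - 1) - yy m x (n - 1)\<bar>"
    by (intro mult_left_mono) auto
  also have "\<dots> \<le> \<bar>fst (x n)\<bar> * ((\<Prod>j<m. \<bar>fst (x (n - 1 - int j))\<bar>) * \<bar>snd (x (n - 1 - int m))\<bar>)"
    by (intro mult_left_mono Suc.IH) auto
  also have "\<dots> = (\<Prod>j<Suc m. \<bar>fst (x (n - int j))\<bar>) * \<bar>snd (x (n - int (Suc m)))\<bar>"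
    by (simp only: prod.lessThan_Suc_shift) (simp add: algebra_simps)
  finally show ?case .
qed

lemma conv_from_diff:
  fixes y :: "nat \<Rightarrow> real"
  assumes "summable (\<lambda>m. y (Suc m) - y m)" and "y 0 = 0"
  shows "convergent y"
proof -
  have "(\<lambda>m. \<Sum>i<m. y (Suc i) - y i) \<longlonglongrightarrow> (\<Sum>i. y (Suc i) - y i)"
    using assms(1) by (rule summable_LIMSEQ)
  moreover have "(\<lambda>m. \<Sum>i<m. y (Suc i) - y i) = y" using assms(2)
    by (simp add: sum_lessThan_telescope fun_eq_iff)
  ultimately show ?thesis by (auto simp: convergent_def)
qed

context setting begin

definition X :: "int \<Rightarrow> 'a \<Rightarrow> real" where "X n \<omega> = Phi n (path \<omega>)"

lemma X_meas[measurable]: "X n \<in> borel_measurable M"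
  unfolding X_def by measurable

lemma conv_AE: "AE \<omega> in M. convergent (\<lambda>m. yy m (path \<omega>) n)"
proof -
  obtain \<epsilon> where \<epsilon>: "0 < \<epsilon>" and AE: "AE \<omega> in M. \<exists>C. \<forall>m. (\<Prod>j<m. \<bar>A (n - int j) \<omega>\<bar>) * exp (lpr (B (n - int m) \<omega>)) \<le> exp (C - \<epsilon> * real m)"
    using key[of n] by blast
  from AE show ?thesis
  proof eventually_elim
    case (elim \<omega>)
    then obtain C where C: "\<And>m. (\<Prod>j<m. \<bar>A (n - int j) \<omega>\<bar>) * exp (lpr (B (n - int m) \<omega>)) \<le> exp (C - \<epsilon> * real m)" by blast
    have bound: "norm (yy (Suc m) (path \<omega>) n - yy m (path \<omega>) n) \<le> exp C * exp (- \<epsilon>) ^ m" for m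
    proof -
      have "norm (yy (Suc m) (path \<omega>) n - yy m (path \<omega>) n) \<le> (\<Prod>j<m. \<bar>A (n - int j) \<omega>\<bar>) * \<bar>B (n - int m) \<omega>\<bar>"
        using yy_diff[of m "path \<omega>" n] by (simp add: path_def)
      also have "\<dots> \<le> (\<Prod>j<m. \<bar>A (n - int j) \<omega>\<bar>) * exp (lpr (B (n - int m) \<omega>))"
        by (intro mult_left_mono abs_le_exp_lpr) (auto simp: prod_nonneg)
      also have "\<dots> \<le> exp (C - \<epsilon> * real m)" by (rule C)
      also have "\<dots> = exp C * exp (- \<epsilon>) ^ m" by (simp add: exp_diff exp_minus exp_of_nat_mult[symmetric] field_simps mult.commute)
      finally show ?thesis .
    qed
    have "summable (\<lambda>m. exp C * exp (- \<epsilon>) ^ m)"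
      using \<epsilon> by (intro summable_mult summable_geometric) simp
    then have "summable (\<lambda>m. yy (Suc m) (path \<omega>) n - yy m (path \<omega>) n)"
      by (rule summable_comparison_test[rotated]) (use bound in auto)
    then show ?case by (rule conv_from_diff) simp
  qed
qed

lemma X_lim: "AE \<omega> in M. (\<lambda>m. yy m (path \<omega>) n) \<longlonglongrightarrow> X n \<omega>"
  using conv_AE[of n] by eventually_elim (simp add: X_def Phi_def convergent_LIMSEQ_iff)

lemma X_rec: "AE \<omega> in M. X (n + 1) \<omega> = A (n + 1) \<omega> * \<bar>X n \<omega>\<bar> + B (n + 1) \<omega>"
  using X_lim[of n]
proof eventually_elim
  case (elim \<omega>)
  have "(\<lambda>m. yy (Suc m) (path \<omega>) (n + 1)) \<longlonglongrightarrow> A (n + 1) \<omega> * \<bar>X n \<omega>\<bar> + B (n + 1) \<omega>"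
    unfolding yy.simps using elim by (auto simp: path_def intro!: tendsto_intros)
  then have "(\<lambda>m. yy m (path \<omega>) (n + 1)) \<longlonglongrightarrow> A (n + 1) \<omega> * \<bar>X n \<omega>\<bar> + B (n + 1) \<omega>"
    by (rule LIMSEQ_imp_Suc)
  then show ?case unfolding X_def Phi_def by (rule limI)
qed

lemma X_stat: "stationary_process M X"
  unfolding stationary_process_def
proof (intro conjI allI impI)
  show "X n \<in> borel_measurable M" for n by measurable
  fix J :: "int set" and k :: int assume J: "finite J"
  define sh where "sh k \<omega> = (\<lambda>i. (\<lambda>n \<omega>. (A n \<omega>, B n \<omega>)) (i + k) \<omega>)" for k \<omega>
  define \<Psi> where "\<Psi> x = (\<lambda>j\<in>J. Phi j x)" for x
  have \<Psi>_m: "\<Psi> \<in> PS \<rightarrow>\<^sub>M PiM J (\<lambda>_. borel)" unfolding \<Psi>_def by measurable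
  have sh_m: "sh k \<in> M \<rightarrow>\<^sub>M PS" for k unfolding sh_def by (rule path_meas) (rule Z_meas)
  have ps: "Phi j (sh k \<omega>) = Phi (j + k) (path \<omega>)" for j \<omega>
    using Phi_shift[of j "path \<omega>" k] by (simp add: sh_def path_def)
  have e1: "(\<lambda>\<omega>. \<lambda>j\<in>J. X (j + k) \<omega>) = \<Psi> \<circ> sh k"
    by (auto simp: fun_eq_iff \<Psi>_def X_def ps)
  have e2: "(\<lambda>\<omega>. \<lambda>j\<in>J. X j \<omega>) = \<Psi> \<circ> sh 0"
    by (auto simp: fun_eq_iff \<Psi>_def sh_def X_def path_def)
  have "distr M PS (sh k) = distr M PS (sh 0)"
    unfolding sh_def using stat_path[OF PS stat, of k] by simp
  then show "distr M (PiM J (\<lambda>_. borel)) (\<lambda>\<omega>. \<lambda>j\<in>J. X (j + k) \<omega>) = distr M (PiM J (\<lambda>_. borel)) (\<lambda>\<omega>. \<lambda>j\<in>J. X j \<omega>)"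
    unfolding e1 e2 using distr_distr[OF \<Psi>_m sh_m[of k]] distr_distr[OF \<Psi>_m sh_m[of 0]] by simp
qed

lemma X_sol: "stationary_solution M A B X"
  unfolding stationary_solution_def using X_stat X_rec by blast

end



context prob_space begin

lemma tail_stat:
  fixes Y :: "int \<Rightarrow> 'a \<Rightarrow> real"
  assumes S: "stationary_process M Y"
  shows "measure M {\<omega>\<in>space M. r < \<bar>Y k \<omega>\<bar>} = measure M {\<omega>\<in>space M. r < \<bar>Y 0 \<omega>\<bar>}"
proof -
  have meas[measurable]: "\<And>n. Y n \<in> borel_measurable M" and
    fdd: "distr M (PiM {0} (\<lambda>_. borel)) (\<lambda>\<omega>. \<lambda>j\<in>{0}. Y (j + k) \<omega>) =
        distr M (PiM {0} (\<lambda>_. borel)) (\<lambda>\<omega>. \<lambda>j\<in>{0::int}. Y j \<omega>)"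
    using S unfolding stationary_process_def by auto
  define Sx where "Sx = {x \<in> space (PiM {0::int} (\<lambda>_. borel :: real measure)). r < \<bar>x 0\<bar>}"
  have Sx: "Sx \<in> sets (PiM {0::int} (\<lambda>_. borel :: real measure))" unfolding Sx_def by measurable
  have m1: "(\<lambda>\<omega>. \<lambda>j\<in>{0}. Y (j + k) \<omega>) \<in> M \<rightarrow>\<^sub>M PiM {0} (\<lambda>_. borel)" by measurable
  have m2: "(\<lambda>\<omega>. \<lambda>j\<in>{0::int}. Y j \<omega>) \<in> M \<rightarrow>\<^sub>M PiM {0} (\<lambda>_. borel)" by measurable
  have "measure M {\<omega>\<in>space M. r < \<bar>Y k \<omega>\<bar>} = measure (distr M (PiM {0} (\<lambda>_. borel)) (\<lambda>\<omega>. \<lambda>j\<in>{0}. Y (j + k) \<omega>)) Sx"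
    by (subst measure_distr[OF m1 Sx]) (auto simp: Sx_def space_PiM intro: arg_cong[where f="measure M"])
  also have "\<dots> = measure (distr M (PiM {0} (\<lambda>_. borel)) (\<lambda>\<omega>. \<lambda>j\<in>{0::int}. Y j \<omega>)) Sx"
    by (simp only: fdd)
  also have "\<dots> = measure M {\<omega>\<in>space M. r < \<bar>Y 0 \<omega>\<bar>}"
    by (subst measure_distr[OF m2 Sx]) (auto simp: Sx_def space_PiM intro: arg_cong[where f="measure M"])
  finally show ?thesis .
qed

lemma tail_lim:
  fixes f :: "'a \<Rightarrow> real"
  assumes [measurable]: "f \<in> borel_measurable M"
  shows "(\<lambda>N::nat. measure M {\<omega>\<in>space M. real N < \<bar>f \<omega>\<bar>}) \<longlonglongrightarrow> 0"
proof -
  have "(\<lambda>N::nat. measure M {\<omega>\<in>space M. real N < \<bar>f \<omega>\<bar>}) \<longlonglongrightarrow> measure M (\<Inter>N. {\<omega>\<in>space M. real N < \<bar>f \<omega>\<bar>})"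
    by (rule finite_Lim_measure_decseq) (auto simp: decseq_def)
  moreover have "(\<Inter>N. {\<omega>\<in>space M. real N < \<bar>f \<omega>\<bar>}) = {}"
  proof -
    have "\<not> (\<forall>N::nat. real N < \<bar>f \<omega>\<bar>)" for \<omega>
      using reals_Archimedean2[of "\<bar>f \<omega>\<bar>"] by (auto simp: not_less intro: less_imp_le)
    then show ?thesis by auto
  qed
  ultimately show ?thesis by simp
qed

end

lemma contract:
  fixes Y W A B :: "int \<Rightarrow> 'a \<Rightarrow> real"
  assumes Y: "\<forall>i. Y (i + 1) \<omega> = A (i + 1) \<omega> * \<bar>Y i \<omega>\<bar> + B (i + 1) \<omega>"
    and W: "\<forall>i. W (i + 1) \<omega> = A (i + 1) \<omega> * \<bar>W i \<omega>\<bar> + B (i + 1) \<omega>"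
  shows "\<bar>Y n \<omega> - W n \<omega>\<bar> \<le> (\<Prod>j<k. \<bar>A (n - int j) \<omega>\<bar>) * \<bar>Y (n - int k) \<omega> - W (n - int k) \<omega>\<bar>"
proof (induction k arbitrary: n)
  case 0 then show ?case by simp
next
  case (Suc k)
  have "\<bar>Y n \<omega> - W n \<omega>\<bar> = \<bar>A n \<omega>\<bar> * \<bar>\<bar>Y (n - 1) \<omega>\<bar> - \<bar>W (n - 1) \<omega>\<bar>\<bar>"
    using Y[rule_format, of "n - 1"] W[rule_format, of "n - 1"] by (simp add: abs_mult[symmetric] algebra_simps)
  also have "\<dots> \<le> \<bar>A n \<omega>\<bar> * \<bar>Y (n - 1) \<omega> - W (n - 1) \<omega>\<bar>"
    by (intro mult_left_mono) auto
  also have "\<dots> \<le> \<bar>A n \<omega>\<bar> * ((\<Prod>j<k. \<bar>A (n - 1 - int j) \<omega>\<bar>) * \<bar>Y (n - 1 - int k) \<omega> - W (n - 1 - int k) \<omega>\<bar>)"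
    by (intro mult_left_mono Suc.IH) auto
  also have "\<dots> = (\<Prod>j<Suc k. \<bar>A (n - int j) \<omega>\<bar>) * \<bar>Y (n - int (Suc k)) \<omega> - W (n - int (Suc k)) \<omega>\<bar>"
    by (simp only: prod.lessThan_Suc_shift) (simp add: algebra_simps)
  finally show ?case .
qed


context setting begin

lemma uniq_n:
  assumes Ys: "stationary_solution M A B Y" and Ws: "stationary_solution M A B W"
  shows "AE \<omega> in M. Y n \<omega> = W n \<omega>"
proof -
  have Ystat: "stationary_process M Y" and Wstat: "stationary_process M W"
    using Ys Ws unfolding stationary_solution_def by auto
  have Ym[measurable]: "\<And>i. Y i \<in> borel_measurable M" and Wm[measurable]: "\<And>i. W i \<in> borel_measurable M"
    using Ystat Wstat unfolding stationary_process_def by auto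
  have rec: "AE \<omega> in M. (\<forall>i. Y (i + 1) \<omega> = A (i + 1) \<omega> * \<bar>Y i \<omega>\<bar> + B (i + 1) \<omega>) \<and>
       (\<forall>i. W (i + 1) \<omega> = A (i + 1) \<omega> * \<bar>W i \<omega>\<bar> + B (i + 1) \<omega>)"
    using Ys Ws unfolding stationary_solution_def by (simp add: AE_all_countable)
  obtain \<epsilon> where \<epsilon>: "0 < \<epsilon>" and AEk: "AE \<omega> in M. \<exists>C. \<forall>m. (\<Prod>j<m. \<bar>A (n - int j) \<omega>\<bar>) * exp (lpr (B (n - int m) \<omega>)) \<le> exp (C - \<epsilon> * real m)"
    using key[of n] by blast
  define E where "E t = {\<omega>\<in>space M. \<forall>m. (\<Prod>j<m. \<bar>A (n - int j) \<omega>\<bar>) \<le> exp (real t - \<epsilon> * real m)}" for t :: nat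
  have E_sets[measurable]: "E t \<in> sets M" for t unfolding E_def by measurable
  have AE_E: "AE \<omega> in M. \<exists>t. \<omega> \<in> E t"
    using AEk AE_space
  proof eventually_elim
    case (elim \<omega>)
    then obtain C where C: "\<And>m. (\<Prod>j<m. \<bar>A (n - int j) \<omega>\<bar>) * exp (lpr (B (n - int m) \<omega>)) \<le> exp (C - \<epsilon> * real m)" by blast
    have "\<omega> \<in> E (nat \<lceil>C\<rceil>)" unfolding E_def
    proof (intro CollectI conjI allI elim)
      fix m
      have "(\<Prod>j<m. \<bar>A (n - int j) \<omega>\<bar>) \<le> (\<Prod>j<m. \<bar>A (n - int j) \<omega>\<bar>) * exp (lpr (B (n - int m) \<omega>))"
      proof -
        have "1 \<le> exp (lpr (B (n - int m) \<omega>))" using lpr_nonneg[of "B (n - int m) \<omega>"] by simp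
        from mult_left_mono[OF this, of "\<Prod>j<m. \<bar>A (n - int j) \<omega>\<bar>"] show ?thesis by (simp add: prod_nonneg)
      qed        
      also have "\<dots> \<le> exp (C - \<epsilon> * real m)" by (rule C)
      also have "\<dots> \<le> exp (real (nat \<lceil>C\<rceil>) - \<epsilon> * real m)" by simp linarith
      finally show "(\<Prod>j<m. \<bar>A (n - int j) \<omega>\<bar>) \<le> exp (real (nat \<lceil>C\<rceil>) - \<epsilon> * real m)" .
    qed
    then show ?case by blast
  qed
  have mt: "(\<lambda>t. measure M (space M - E t)) \<longlonglongrightarrow> 0"
  proof -
    have "(\<lambda>t. measure M (space M - E t)) \<longlonglongrightarrow> measure M (\<Inter>t. space M - E t)"
    proof (rule finite_Lim_measure_decseq)
      show "decseq (\<lambda>t. space M - E t)"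
        unfolding decseq_def E_def by (auto intro: order_trans)
    qed auto
    moreover have "measure M (\<Inter>t. space M - E t) = 0"
    proof (subst prob_eq_0)
      show "(\<Inter>t. space M - E t) \<in> sets M" by measurable
      show "AE x in M. x \<notin> (\<Inter>t. space M - E t)" using AE_E by eventually_elim auto
    qed
    ultimately show ?thesis by simp
  qed
  define D where "D \<omega> = \<bar>Y n \<omega> - W n \<omega>\<bar>" for \<omega>
  have D_meas[measurable]: "D \<in> borel_measurable M" unfolding D_def by measurable
  have D0: "measure M {\<omega>\<in>space M. \<delta> < D \<omega>} = 0" if \<delta>: "0 < \<delta>" for \<delta>
  proof -
    have small: "measure M {\<omega>\<in>space M. \<delta> < D \<omega>} < 3 * \<eta>" if \<eta>: "0 < \<eta>" for \<eta>
    proof -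
      obtain t where t: "measure M (space M - E t) < \<eta>"
        using order_tendstoD(2)[OF mt \<eta>] by (auto simp: eventually_sequentially)
      obtain N1 where N1: "measure M {\<omega>\<in>space M. real N1 < \<bar>Y 0 \<omega>\<bar>} < \<eta>"
        using order_tendstoD(2)[OF tail_lim[of "Y 0"] \<eta>] by (auto simp: eventually_sequentially)
      obtain N2 where N2: "measure M {\<omega>\<in>space M. real N2 < \<bar>W 0 \<omega>\<bar>} < \<eta>"
        using order_tendstoD(2)[OF tail_lim[of "W 0"] \<eta>] by (auto simp: eventually_sequentially)
      define N where "N = max N1 N2"
      have NY: "measure M {\<omega>\<in>space M. real N < \<bar>Y 0 \<omega>\<bar>} < \<eta>"
      proof -
        have "measure M {\<omega>\<in>space M. real N < \<bar>Y 0 \<omega>\<bar>} \<le> measure M {\<omega>\<in>space M. real N1 < \<bar>Y 0 \<omega>\<bar>}"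
          by (rule finite_measure_mono) (auto simp: N_def)
        then show ?thesis using N1 by linarith
      qed
      have NW: "measure M {\<omega>\<in>space M. real N < \<bar>W 0 \<omega>\<bar>} < \<eta>"
      proof -
        have "measure M {\<omega>\<in>space M. real N < \<bar>W 0 \<omega>\<bar>} \<le> measure M {\<omega>\<in>space M. real N2 < \<bar>W 0 \<omega>\<bar>}"
          by (rule finite_measure_mono) (auto simp: N_def)
        then show ?thesis using N2 by linarith
      qed
      define L where "L = real t + ln (2 * (real N + 1) / \<delta>)"
      obtain k :: nat where k: "L / \<epsilon> \<le> real k" using real_arch_simple by blast
      have kL: "L \<le> \<epsilon> * real k" using k \<epsilon> by (simp add: divide_le_eq mult.commute)
      have expk: "exp (real t - \<epsilon> * real k) \<le> \<delta> / (2 * (real N + 1))"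
      proof -
        have "exp (real t - \<epsilon> * real k) \<le> exp (- ln (2 * (real N + 1) / \<delta>))"
          using kL unfolding L_def by simp
        also have "\<dots> = \<delta> / (2 * (real N + 1))" using \<delta> by (simp add: exp_minus)
        finally show ?thesis .
      qed
      have incl: "AE \<omega> in M. \<omega> \<in> {\<omega>\<in>space M. \<delta> < D \<omega>} \<longrightarrow>
          \<omega> \<in> (space M - E t) \<union> {\<omega>\<in>space M. real N < \<bar>Y (n - int k) \<omega>\<bar>} \<union> {\<omega>\<in>space M. real N < \<bar>W (n - int k) \<omega>\<bar>}"
        using rec
      proof eventually_elim
        case (elim \<omega>)
        show ?case
        proof (intro impI, rule ccontr)
          assume \<omega>: "\<omega> \<in> {\<omega>\<in>space M. \<delta> < D \<omega>}"
          assume "\<omega> \<notin> (space M - E t) \<union> {\<omega>\<in>space M. real N < \<bar>Y (n - int k) \<omega>\<bar>} \<union> {\<omega>\<in>space M. real N < \<bar>W (n - int k) \<omega>\<bar>}"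
          then have Et: "\<omega> \<in> E t" and y: "\<bar>Y (n - int k) \<omega>\<bar> \<le> real N" and w: "\<bar>W (n - int k) \<omega>\<bar> \<le> real N"
            using \<omega> by auto
          have P: "(\<Prod>j<k. \<bar>A (n - int j) \<omega>\<bar>) \<le> exp (real t - \<epsilon> * real k)" using Et unfolding E_def by auto
          have "D \<omega> \<le> (\<Prod>j<k. \<bar>A (n - int j) \<omega>\<bar>) * \<bar>Y (n - int k) \<omega> - W (n - int k) \<omega>\<bar>"
            unfolding D_def using contract[of Y \<omega> A B W n k] elim by blast
          also have "\<dots> \<le> (\<delta> / (2 * (real N + 1))) * (2 * real N)"
          proof (rule mult_mono)
            show "(\<Prod>j<k. \<bar>A (n - int j) \<omega>\<bar>) \<le> \<delta> / (2 * (real N + 1))" using P expk by linarith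
            show "\<bar>Y (n - int k) \<omega> - W (n - int k) \<omega>\<bar> \<le> 2 * real N" using y w by linarith
          qed (use \<delta> in auto)
          also have "\<dots> \<le> \<delta>" using \<delta> by (simp add: field_simps)
          finally show False using \<omega> by simp
        qed
      qed
      have "measure M {\<omega>\<in>space M. \<delta> < D \<omega>} \<le> measure M ((space M - E t) \<union> {\<omega>\<in>space M. real N < \<bar>Y (n - int k) \<omega>\<bar>} \<union> {\<omega>\<in>space M. real N < \<bar>W (n - int k) \<omega>\<bar>})"
        by (rule finite_measure_mono_AE[OF incl]) measurable
      also have "\<dots> \<le> measure M (space M - E t) + measure M {\<omega>\<in>space M. real N < \<bar>Y (n - int k) \<omega>\<bar>} + measure M {\<omega>\<in>space M. real N < \<bar>W (n - int k) \<omega>\<bar>}"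
        by (intro order_trans[OF measure_Un_le] add_mono measure_Un_le order_refl) measurable
      also have "\<dots> = measure M (space M - E t) + measure M {\<omega>\<in>space M. real N < \<bar>Y 0 \<omega>\<bar>} + measure M {\<omega>\<in>space M. real N < \<bar>W 0 \<omega>\<bar>}"
        using tail_stat[OF Ystat, of "real N" "n - int k"] tail_stat[OF Wstat, of "real N" "n - int k"] by linarith
      also have "\<dots> < 3 * \<eta>" using t NY NW by simp
      finally show ?thesis .
    qed
    have "measure M {\<omega>\<in>space M. \<delta> < D \<omega>} \<le> 0"
    proof (rule ccontr)
      assume "\<not> ?thesis"
      then have "0 < measure M {\<omega>\<in>space M. \<delta> < D \<omega>} / 3" by simp
      from small[OF this] show False by simp
    qed
    then show ?thesis using measure_nonneg[of M "{\<omega>\<in>space M. \<delta> < D \<omega>}"] by linarith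
  qed
  have "AE \<omega> in M. \<forall>q::nat. \<not> inverse (real (Suc q)) < D \<omega>"
  proof (subst AE_all_countable, intro allI)
    fix q :: nat
    have "AE \<omega> in M. \<omega> \<notin> {\<omega>\<in>space M. inverse (real (Suc q)) < D \<omega>}"
    proof -
      have S: "{\<omega>\<in>space M. inverse (real (Suc q)) < D \<omega>} \<in> sets M" by measurable
      have "inverse (real (Suc q)) > 0" by simp
      from D0[OF this] show ?thesis using prob_eq_0[OF S] by simp
    qed
    then show "AE \<omega> in M. \<not> inverse (real (Suc q)) < D \<omega>" using AE_space by eventually_elim auto
  qed
  then show ?thesis
  proof eventually_elim
    case (elim \<omega>)
    have "\<not> 0 < D \<omega>"
    proof
      assume "0 < D \<omega>"
      then obtain q where "inverse (real (Suc q)) < D \<omega>" using reals_Archimedean by blast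
      with elim show False by blast
    qed
    then show ?case by (simp add: D_def)
  qed
qed

end

theorem theorem2:
  fixes M :: "'a measure" and A B :: "int \<Rightarrow> 'a \<Rightarrow> real"
  assumes "prob_space M"
    and "stationary_process M (\<lambda>n \<omega>. (A n \<omega>, B n \<omega>))"
    and "ergodic_process M (\<lambda>n \<omega>. (A n \<omega>, B n \<omega>))"
    and "\<And>n. (\<integral>\<^sup>+ \<omega>. log_plus_abs (A n \<omega>) \<partial>M) < (\<integral>\<^sup>+ \<omega>. log_minus_abs (A n \<omega>) \<partial>M)"
    and "\<And>n. (\<integral>\<^sup>+ \<omega>. log_plus_abs (B n \<omega>) \<partial>M) < \<infinity>"
  shows "\<exists>X. stationary_solution M A B X \<and>
           (\<forall>Y. stationary_solution M A B Y \<longrightarrow> (AE \<omega> in M. \<forall>n. Y n \<omega> = X n \<omega>))"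
proof -
  have S: "setting M A B" using assms by (intro setting.intro)
  show ?thesis
  proof (intro exI[of _ "setting.X A B"] conjI allI impI)
    show "stationary_solution M A B (setting.X A B)" by (rule setting.X_sol[OF S])
    fix Y assume Y: "stationary_solution M A B Y"
    have "\<forall>n. AE \<omega> in M. Y n \<omega> = setting.X A B n \<omega>"
      using setting.uniq_n[OF S Y setting.X_sol[OF S]] by blast
    then show "AE \<omega> in M. \<forall>n. Y n \<omega> = setting.X A B n \<omega>" by (simp add: AE_all_countable)
  qed
qed

end
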